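(* Let $0<\alpha\leq 1/2$. Then the equation $$\cos(2\pi\alpha) =\cos(2\pi\sqrt{\lambda}) - \frac{1-\sqrt{1-4\lambda}}{4\sqrt{\lambda}}\, \sin(2\pi\sqrt{\lambda})$$ has a unique solution $\lambda=\lambda_*(\alpha)$ in the interval $(0,\alpha^2)$. *)

theory Defs
  imports Complex_Main
begin

end

theory Submission
  imports Defs
begin

lemma g_eq:
  fixes s :: real
  assumes "0 < s" "s \<le> 1/2"
  shows "(1 - sqrt (1 - 4*s^2)) / (4*s) = s / (1 + sqrt (1 - 4*s^2))"
proof -
  define r where "r = sqrt (1 - 4*s^2)"
  have "s^2 \<le> (1/2)^2" using assms by (intro power_mono) auto
  hence "4*s^2 \<le> 1" by (simp add: power_divide)
  hence r0: "r \<ge> 0" and r2: "r^2 = 1 - 4*s^2" unfolding r_def by auto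
  have "(1 - r) * (1 + r) = 4*s*s" using r2 by (simp add: algebra_simps power2_eq_square)
  hence "(1 - r) / (4*s) = s / (1 + r)" using assms r0
    by (simp add: divide_simps)
  thus ?thesis unfolding r_def .
qed

lemma g_mono:
  fixes s1 s2 :: real
  assumes "0 < s1" "s1 < s2" "s2 \<le> 1/2"
  shows "s1 / (1 + sqrt (1 - 4*s1^2)) < s2 / (1 + sqrt (1 - 4*s2^2))"
proof -
  have "s2^2 \<le> (1/2)^2" using assms by (intro power_mono) auto
  hence "4*s2^2 \<le> 1" by (simp add: power_divide)
  hence p2: "sqrt (1 - 4*s2^2) \<ge> 0" by auto
  have "s1^2 \<le> s2^2" using assms by (intro power_mono) auto
  hence le: "sqrt (1 - 4*s2^2) \<le> sqrt (1 - 4*s1^2)" by auto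
  have pos1: "1 + sqrt (1 - 4*s1^2) > 0" using p2 le by linarith
  have pos2: "1 + sqrt (1 - 4*s2^2) > 0" using p2 by linarith
  have "s1 / (1 + sqrt (1 - 4*s1^2)) < s2 / (1 + sqrt (1 - 4*s1^2))"
    using assms pos1 by (intro divide_strict_right_mono) auto
  also have "\<dots> \<le> s2 / (1 + sqrt (1 - 4*s2^2))"
    using le assms pos1 pos2 by (intro divide_left_mono) auto
  finally show ?thesis .
qed

lemma q_mono:
  fixes C a b :: real
  assumes "\<bar>C\<bar> \<le> 1" "0 < a" "a < b" "b < pi"
  shows "(cos b - C) / sin b < (cos a - C) / sin a"
proof (rule DERIV_neg_imp_decreasing[OF assms(3)])
  fix x assume x: "a \<le> x" "x \<le> b"
  have sx: "sin x > 0" using x assms by (intro sin_gt_zero) auto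
  have cx: "\<bar>cos x\<bar> < 1"
  proof -
    have "(sin x)^2 > 0" using sx by simp
    hence "(cos x)^2 < 1" using sin_cos_squared_add[of x] by linarith
    thus ?thesis using abs_square_less_1 by blast
  qed
  have "\<bar>C\<bar> * \<bar>cos x\<bar> \<le> \<bar>cos x\<bar>" using assms(1) by (intro mult_left_le_one_le) auto
  hence "\<bar>C * cos x\<bar> < 1" using cx by (simp add: abs_mult)
  hence neg: "C * cos x - 1 < 0" by auto
  have D: "DERIV (\<lambda>t. (cos t - C) / sin t) x :> ((- sin x) * sin x - (cos x - C) * cos x) / (sin x * sin x)"
    using sx by (auto intro!: derivative_eq_intros)
  have E: "((- sin x) * sin x - (cos x - C) * cos x) / (sin x * sin x) = (C * cos x - 1) / (sin x)^2"
    using sin_cos_squared_add[of x] by (simp add: power2_eq_square algebra_simps)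
  have N: "(C * cos x - 1) / (sin x)^2 < 0" using neg sx by (simp add: divide_neg_pos)
  show "\<exists>y. DERIV (\<lambda>t. (cos t - C) / sin t) x :> y \<and> y < 0"
    using D N unfolding E by blast
qed

lemma numeric:
  "cos (2*pi*(12/25)) - (12/25) / (1 + sqrt (1 - 4*(12/25)^2)) * sin (2*pi*(12/25)) < -1"
proof -
  define x where "x = pi/25"
  have sq: "sqrt (1 - 4*(12/25)^2) = (7/25::real)"
    by (rule real_sqrt_unique) (auto simp: power2_eq_square)
  have g: "(12/25) / (1 + sqrt (1 - 4*(12/25)^2)) = (3/8::real)" unfolding sq by simp
  have a: "2*pi*(12/25) = pi - x" unfolding x_def by simp
  have cs: "cos (2*pi*(12/25)) = - cos x" "sin (2*pi*(12/25)) = sin x" unfolding a by simp_all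
  have x0: "0 < x" "x < 4/25" unfolding x_def using pi_gt_zero pi_less_4 by auto
  have t0: "sin x > 0" using x0 by (intro sin_gt_zero) (auto simp: x_def)
  have t1: "sin x < 48/73" using sin_x_le_x[of x] x0 by auto
  have c0: "cos x > 0" using x0 by (intro cos_gt_zero) (auto simp: x_def)
  have sum: "(sin x)^2 + (cos x)^2 = 1" by simp
  have m: "sin x * sin x < sin x * (48/73)" using mult_strict_left_mono[OF t1 t0] .
  have e1: "(cos x)^2 = 1 - sin x * sin x" using sum by (simp add: power2_eq_square)
  have e2: "(1 - 3/8 * sin x)^2 = 1 - 3/4 * sin x + 9/64 * (sin x * sin x)"
    by (simp add: power2_eq_square algebra_simps)
  have P: "(1 - 3/8 * sin x)^2 < (cos x)^2" unfolding e1 e2 using m t0 by linarith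
  have h: "1 - 3/8 * sin x < cos x" by (rule power2_less_imp_less[OF P]) (use c0 in simp)
  show ?thesis unfolding g cs using h by linarith
qed

theorem lemma4p1:
  fixes \<alpha> :: real
  assumes "0 < \<alpha>" and "\<alpha> \<le> 1/2"
  shows "\<exists>!l::real. l \<in> {0<..<\<alpha>^2} \<and>
           cos (2*pi*\<alpha>) = cos (2*pi*sqrt l)
             - (1 - sqrt (1 - 4*l)) / (4 * sqrt l) * sin (2*pi*sqrt l)"
proof -
  define C where "C = cos (2*pi*\<alpha>)"
  define g where "g = (\<lambda>s::real. s / (1 + sqrt (1 - 4*s^2)))"
  define F where "F = (\<lambda>s. cos (2*pi*s) - g s * sin (2*pi*s))"
  have C1: "C < 1" unfolding C_def using assms cos_monotone_0_pi[of 0 "2*pi*\<alpha>"] by auto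
  have Cabs: "\<bar>C\<bar> \<le> 1" unfolding C_def by simp
  have equiv: "(cos (2*pi*\<alpha>) = cos (2*pi*sqrt l)
             - (1 - sqrt (1 - 4*l)) / (4 * sqrt l) * sin (2*pi*sqrt l)) \<longleftrightarrow> F (sqrt l) = C"
    if "l \<in> {0<..<\<alpha>^2}" for l
  proof -
    have l0: "0 < sqrt l" using that by auto
    have "sqrt l < sqrt (\<alpha>^2)" using that by (intro real_sqrt_less_mono) auto
    hence l1: "sqrt l < \<alpha>" using assms by simp
    have "(1 - sqrt (1 - 4*l)) / (4 * sqrt l) = g (sqrt l)"
      using g_eq[of "sqrt l"] l0 l1 assms that unfolding g_def by auto
    thus ?thesis unfolding F_def C_def by auto
  qed
  have Fq: "F s = C \<longleftrightarrow> (cos (2*pi*s) - C) / sin (2*pi*s) = g s"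
    if "0 < s" "s < 1/2" for s
  proof -
    have "sin (2*pi*s) > 0" using that by (intro sin_gt_zero) auto
    thus ?thesis unfolding F_def by (auto simp: field_simps)
  qed
  have uniq: "s1 = s2" if "0 < s1" "s1 < \<alpha>" "0 < s2" "s2 < \<alpha>" "F s1 = C" "F s2 = C" for s1 s2
  proof (rule ccontr)
    assume "s1 \<noteq> s2"
    then consider "s1 < s2" | "s2 < s1" by linarith
    thus False
    proof cases
      case 1
      have "(cos (2*pi*s2) - C) / sin (2*pi*s2) < (cos (2*pi*s1) - C) / sin (2*pi*s1)"
        using that 1 assms by (intro q_mono Cabs) auto
      moreover have "g s1 < g s2" unfolding g_def using that 1 assms by (intro g_mono) auto
      ultimately show False using Fq that assms by auto
    next
      case 2
      have "(cos (2*pi*s1) - C) / sin (2*pi*s1) < (cos (2*pi*s2) - C) / sin (2*pi*s2)"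
        using that 2 assms by (intro q_mono Cabs) auto
      moreover have "g s2 < g s1" unfolding g_def using that 2 assms by (intro g_mono) auto
      ultimately show False using Fq that assms by auto
    qed
  qed
  obtain b where b: "0 < b" "b \<le> \<alpha>" "F b < C"
  proof (cases "\<alpha> < 1/2")
    case True
    have sn: "sin (2*pi*\<alpha>) > 0" using assms True by (intro sin_gt_zero) auto
    have "\<alpha>^2 \<le> (1/2)^2" using assms by (intro power_mono) auto
    hence "4*\<alpha>^2 \<le> 1" by (simp add: power_divide)
    hence "1 + sqrt (1 - 4*\<alpha>^2) > 0" using real_sqrt_ge_zero[of "1 - 4*\<alpha>^2"] by linarith
    hence "g \<alpha> > 0" unfolding g_def using assms
      by (intro divide_pos_pos) auto
    hence "g \<alpha> * sin (2*pi*\<alpha>) > 0" using sn by simp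
    hence "F \<alpha> < C" unfolding F_def C_def by auto
    thus ?thesis using that assms by auto
  next
    case False
    hence a: "\<alpha> = 1/2" using assms by auto
    have "C = -1" unfolding C_def a by simp
    moreover have "F (12/25) < -1" using numeric unfolding F_def g_def by simp
    ultimately show ?thesis using that[of "12/25"] a by auto
  qed
  have nz: "\<forall>x\<in>{0..b}. 1 + sqrt (1 - 4*x^2) \<noteq> 0"
  proof
    fix x assume "x \<in> {0..b}"
    hence "x^2 \<le> (1/2)^2" using b assms by (intro power_mono) auto
    hence "4*x^2 \<le> 1" by (simp add: power_divide)
    thus "1 + sqrt (1 - 4*x^2) \<noteq> 0" using real_sqrt_ge_zero[of "1 - 4*x^2"] by linarith
  qed
  have cont: "continuous_on {0..b} F"
    unfolding F_def g_def using nz by (intro continuous_intros) auto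
  have F0: "F 0 = 1" unfolding F_def g_def by simp
  obtain s where s: "0 \<le> s" "s \<le> b" "F s = C"
    using IVT2'[of F b C 0] cont b C1 F0 by auto
  have s0: "s \<noteq> 0" using s F0 C1 by auto
  have sb: "s \<noteq> b" using s b by auto
  have spos: "0 < s" "s < \<alpha>" using s s0 sb b by auto
  let ?l = "s^2"
  have lin: "?l \<in> {0<..<\<alpha>^2}" using spos by (auto intro: power_strict_mono)
  have P1: "?l \<in> {0<..<\<alpha>^2} \<and> cos (2*pi*\<alpha>) = cos (2*pi*sqrt ?l)
             - (1 - sqrt (1 - 4*?l)) / (4 * sqrt ?l) * sin (2*pi*sqrt ?l)"
  proof -
    have sq: "sqrt ?l = s" using spos by simp
    have "F (sqrt ?l) = C" using sq s by simp
    thus ?thesis using equiv[OF lin] lin by blast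
  qed
  have U: "l = ?l" if h: "l \<in> {0<..<\<alpha>^2} \<and> cos (2*pi*\<alpha>) = cos (2*pi*sqrt l)
             - (1 - sqrt (1 - 4*l)) / (4 * sqrt l) * sin (2*pi*sqrt l)" for l
  proof -
    have Fl: "F (sqrt l) = C" using equiv h by blast
    have l0: "0 < sqrt l" using h by auto
    have "sqrt l < sqrt (\<alpha>^2)" using h by (intro real_sqrt_less_mono) auto
    hence l1: "sqrt l < \<alpha>" using assms by simp
    have "sqrt l = s" using uniq[OF l0 l1 spos Fl s(3)] .
    moreover have "l = (sqrt l)^2" using h by simp
    ultimately show "l = ?l" by simp
  qed
  show ?thesis using P1 U by blast
qed

end
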